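(* Let $P$ be a finite poset, $\mathbb K$ a field, $R=\mathbb K[\mathcal C(P)]$ and $\omega$ the canonical ideal of $R$. Then for every positive integer $n$, $$\omega^{(n)}=\omega^{n}=\bigoplus_{\xi\in S^{(n)}}\mathbb K\,T^\xi\qquad\text{and}\qquad \omega^{(-n)}=(\omega^{(-1)})^n=\bigoplus_{\xi\in S^{(-n)}}\mathbb K\,T^\xi .$$
   Context: $P^-=P\cup\{-\infty\}$ with $-\infty<z$ for all $z\in P$. For a function $\xi$ and a finite set $B$ in its domain, $\xi^+(B)=\sum_{b\in B}\xi(b)$. The chain polytope is $\mathcal C(P)=\{f\in\mathbb R^P: f(x)\ge 0\ \forall x,\ f^+(C)\le 1$ for every chain $C$ of $P\}$. Let $T_x$ ($x\in P^-$) be indeterminates; for $f\in\mathbb Z^{P^-}$ put $T^f=\prod_{x\in P^-}T_x^{f(x)}$, graded by $\deg T^f=f(-\infty)$. For $n\in\mathbb Z$ let $S^{(n)}=\{\xi\in\mathbb Z^{P^-}: \xi(x)\ge n$ for all $x\in P$, and $\xi(-\infty)\ge \xi^+(C)+n$ for every maximal chain $C$ of $P\}$. The Ehrhart ring is $\mathbb K[\mathcal C(P)]=\bigoplus_{\xi\in S^{(0)}}\mathbb K T^\xi$ (the subring of $\mathbb K[T_x^{\pm1}:x\in P][T_{-\infty}]$ generated by $T^f$ with $f(-\infty)>0$, $f|_P/f(-\infty)\in\mathcal C(P)$), and its canonical ideal is $\omega=\bigoplus_{\xi\in S^{(1)}}\mathbb K T^\xi$ (monomials with $f|_P/f(-\infty)$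 in the relative interior of $\mathcal C(P)$). For $n\in\mathbb Z$, $\omega^{(n)}$ denotes the $n$-th power of $\omega$ in the group of divisorial fractional ideals of $R$, with product $I\cdot J=R:_{Q(R)}(R:_{Q(R)}IJ)$; for $n>0$ it is the $n$-th symbolic power, and $\omega^{(-1)}=R:_{Q(R)}\omega$ is the anticanonical ideal. *)

theory Defs
  imports Main "HOL-Library.Poly_Mapping"
begin

text \<open>Finite poset: a finite carrier P inside a partially ordered type.
  P^- is modelled by 'a option, with None playing the role of -infinity.
  Exponent vectors are finitely supported maps 'a option =>0 int, required to
  vanish outside P^-.  The Laurent polynomial ring is the group ring
  ('a option =>0 int) =>0 'k, monomial T^xi = single xi 1.\<close>

definition is_chain :: "'a::order set \<Rightarrow> 'a set \<Rightarrow> bool" where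
  "is_chain P C \<longleftrightarrow> C \<subseteq> P \<and> (\<forall>x\<in>C. \<forall>y\<in>C. x \<le> y \<or> y \<le> x)"

definition is_max_chain :: "'a::order set \<Rightarrow> 'a set \<Rightarrow> bool" where
  "is_max_chain P C \<longleftrightarrow> is_chain P C \<and> (\<forall>D. is_chain P D \<and> C \<subseteq> D \<longrightarrow> D = C)"

definition xi_plus :: "('a option \<Rightarrow>\<^sub>0 int) \<Rightarrow> 'a set \<Rightarrow> int" where
  "xi_plus \<xi> C = (\<Sum>b\<in>C. Poly_Mapping.lookup \<xi> (Some b))"

definition S_set :: "'a::order set \<Rightarrow> int \<Rightarrow> ('a option \<Rightarrow>\<^sub>0 int) set" where
  "S_set P n = {\<xi>. (\<forall>x. x \<notin> P \<longrightarrow> Poly_Mapping.lookup \<xi> (Some x) = 0)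
                 \<and> (\<forall>x\<in>P. Poly_Mapping.lookup \<xi> (Some x) \<ge> n)
                 \<and> (\<forall>C. is_max_chain P C \<longrightarrow> Poly_Mapping.lookup \<xi> None \<ge> xi_plus \<xi> C + n)}"

definition monspan :: "('b \<Rightarrow>\<^sub>0 int) set \<Rightarrow> (('b \<Rightarrow>\<^sub>0 int) \<Rightarrow>\<^sub>0 'k::field) set" where
  "monspan S = {p. Poly_Mapping.keys p \<subseteq> S}"

text \<open>Fractional-ideal operations inside an ambient field F containing R.\<close>

definition quot_field :: "'f::field set \<Rightarrow> 'f set" where
  "quot_field R = {a / b | a b. a \<in> R \<and> b \<in> R \<and> b \<noteq> 0}"

definition colon :: "'f::field set \<Rightarrow> 'f set \<Rightarrow> 'f set" where
  "colon R I = {x \<in> quot_field R. \<forall>y\<in>I. x * y \<in> R}"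

definition ideal_prod :: "'f::field set \<Rightarrow> 'f set \<Rightarrow> 'f set" where
  "ideal_prod I J = {(\<Sum>i<k. x i * y i) | (k::nat) x y. \<forall>i<k. x i \<in> I \<and> y i \<in> J}"

fun ord_pow :: "'f::field set \<Rightarrow> 'f set \<Rightarrow> nat \<Rightarrow> 'f set" where
  "ord_pow R I 0 = R"
| "ord_pow R I (Suc 0) = I"
| "ord_pow R I (Suc (Suc n)) = ideal_prod (ord_pow R I (Suc n)) I"

text \<open>Product in the group of divisorial fractional ideals: R:(R:IJ).\<close>
definition div_prod :: "'f::field set \<Rightarrow> 'f set \<Rightarrow> 'f set \<Rightarrow> 'f set" where
  "div_prod R I J = colon R (colon R (ideal_prod I J))"

fun div_pow :: "'f::field set \<Rightarrow> 'f set \<Rightarrow> nat \<Rightarrow> 'f set" where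
  "div_pow R I 0 = R"
| "div_pow R I (Suc 0) = I"
| "div_pow R I (Suc (Suc n)) = div_prod R (div_pow R I (Suc n)) I"

end

theory Submission
  imports Defs
begin


lemma phi_mono:
  fixes a b n :: int
  assumes n: "n \<ge> 1" and ab: "a \<le> b"
  shows "a - a div n \<le> b - b div n"
proof -
  define q where "q = b div n - a div n"
  have ea: "a = n * (a div n) + a mod n" by simp
  have eb: "b = n * (b div n) + b mod n" by simp
  have ma: "0 \<le> a mod n" "a mod n < n" using n by auto
  have mb: "0 \<le> b mod n" "b mod n < n" using n by auto
  have "b - a = n * q + (b mod n - a mod n)" unfolding q_def using ea eb by (simp add: algebra_simps)
  show ?thesis
  proof (cases "q \<le> 0")
    case True thus ?thesis using ab unfolding q_def by linarith
  next
    case False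
    have "0 \<le> (n - 1) * (q - 1)" using False n by simp
    hence "n * q - n - q + 1 \<ge> 0" by (simp add: algebra_simps)
    thus ?thesis using \<open>b - a = _\<close> ma mb unfolding q_def by linarith
  qed
qed

lemma psi_mono:
  fixes a b n :: int
  assumes n: "n \<ge> 1" and ab: "a \<le> b"
  shows "a div n \<le> b div n"
  using zdiv_mono1 ab n by auto

lemma arith_pos:
  fixes B d n :: int
  assumes n: "n \<ge> 1" and d: "d \<ge> n"
  shows "(B + d) div n - B div n \<ge> 1"
    "d - ((B + d) div n - B div n) \<ge> n - 1"
proof -
  have e: "(B + n) div n = B div n + 1"
  proof -
    have "(B + 1 * n) div n = 1 + B div n" using n by (subst div_mult_self1) auto
    thus ?thesis by simp
  qed
  show "(B + d) div n - B div n \<ge> 1" using psi_mono[OF n, of "B + n" "B + d"] d e by simp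
  have "(B + n) - (B + n) div n \<le> (B + d) - (B + d) div n" using phi_mono[OF n, of "B + n" "B + d"] d by simp
  thus "d - ((B + d) div n - B div n) \<ge> n - 1" using e by simp
qed

lemma arith_neg:
  fixes B d n :: int
  assumes n: "n \<ge> 1" and d: "d \<ge> - n"
  shows "(B + d) div n - B div n \<ge> - 1"
    "d - ((B + d) div n - B div n) \<ge> - (n - 1)"
proof -
  have e: "(B - n) div n = B div n - 1"
  proof -
    have "(B + (-1) * n) div n = -1 + B div n" using n by (subst div_mult_self1) auto
    thus ?thesis by simp
  qed
  show "(B + d) div n - B div n \<ge> - 1" using psi_mono[OF n, of "B - n" "B + d"] d e by simp
  have "(B - n) - (B - n) div n \<le> (B + d) - (B + d) div n" using phi_mono[OF n, of "B - n" "B + d"] d by simp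
  thus "d - ((B + d) div n - B div n) \<ge> - (n - 1)" using e by simp
qed


lemma is_chain_subset: "is_chain P C \<Longrightarrow> C \<subseteq> P"
  by (simp add: is_chain_def)

lemma max_chain_ext:
  assumes "finite Q" "is_chain Q C"
  shows "\<exists>D. is_max_chain Q D \<and> C \<subseteq> D"
proof -
  let ?K = "{D. is_chain Q D \<and> C \<subseteq> D}"
  have fin: "finite ?K"
    by (rule finite_subset[of _ "Pow Q"]) (auto simp: is_chain_def assms(1))
  have ne: "?K \<noteq> {}" using assms(2) by auto
  obtain m where m: "m \<in> ?K" "\<forall>b\<in>?K. m \<le> b \<longrightarrow> m = b"
    using finite_has_maximal[OF fin ne] by blast
  have "is_max_chain Q m"
    unfolding is_max_chain_def using m by auto
  then show ?thesis using m by auto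
qed

definition mk :: "'a set \<Rightarrow> int \<Rightarrow> ('a \<Rightarrow> int) \<Rightarrow> ('a option \<Rightarrow>\<^sub>0 int)" where
  "mk P c v = Poly_Mapping.single None c + (\<Sum>y\<in>P. Poly_Mapping.single (Some y) (v y))"

lemma mk_None: "finite P \<Longrightarrow> Poly_Mapping.lookup (mk P c v) None = c"
  by (simp add: mk_def lookup_add lookup_sum lookup_single)

lemma mk_Some: "finite P \<Longrightarrow> Poly_Mapping.lookup (mk P c v) (Some x) = (if x \<in> P then v x else 0)"
  by (simp add: mk_def lookup_add lookup_sum lookup_single when_def)

lemma xi_plus_add: "xi_plus (a + b) C = xi_plus a C + xi_plus b C"
  by (simp add: xi_plus_def lookup_add sum.distrib)

lemma xi_plus_diff: "xi_plus (a - b) C = xi_plus a C - xi_plus b C"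
  by (simp add: xi_plus_def lookup_minus sum_subtractf)

lemma S_add:
  assumes "\<xi> \<in> S_set P a" "\<eta> \<in> S_set P b"
  shows "\<xi> + \<eta> \<in> S_set P (a + b)"
  unfolding S_set_def
proof (intro CollectI conjI allI ballI impI)
  fix C assume C: "is_max_chain P C"
  have "xi_plus \<xi> C + a \<le> Poly_Mapping.lookup \<xi> None" "xi_plus \<eta> C + b \<le> Poly_Mapping.lookup \<eta> None"
    using assms C unfolding S_set_def by auto
  thus "xi_plus (\<xi> + \<eta>) C + (a + b) \<le> Poly_Mapping.lookup (\<xi> + \<eta>) None"
    by (simp add: lookup_add xi_plus_add)
next
  fix x assume "x \<in> P"
  thus "a + b \<le> Poly_Mapping.lookup (\<xi> + \<eta>) (Some x)"
    using assms unfolding S_set_def by (simp add: lookup_add add_mono)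
next
  fix x assume "x \<notin> P"
  thus "Poly_Mapping.lookup (\<xi> + \<eta>) (Some x) = 0"
    using assms unfolding S_set_def by (simp add: lookup_add)
qed

lemma S_mono: "a \<le> b \<Longrightarrow> S_set P b \<subseteq> S_set P a"
  unfolding S_set_def by force

lemma xi_plus_mk: "finite P \<Longrightarrow> C \<subseteq> P \<Longrightarrow> xi_plus (mk P c v) C = (\<Sum>y\<in>C. v y)"
  unfolding xi_plus_def by (rule sum.cong) (auto simp: mk_Some)

lemma tight_point:
  fixes P :: "'a::order set"
  assumes fin: "finite P" and x: "x \<in> P"
  shows "\<exists>\<mu>\<in>S_set P k. Poly_Mapping.lookup \<mu> (Some x) = k"
proof -
  let ?\<mu> = "mk P (\<bar>k\<bar> * (int (card P) + 1)) (\<lambda>_. k)"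
  have "?\<mu> \<in> S_set P k"
    unfolding S_set_def
  proof (intro CollectI conjI allI ballI impI)
    fix C assume C: "is_max_chain P C"
    hence CP: "C \<subseteq> P" by (simp add: is_max_chain_def is_chain_def)
    have cc: "card C \<le> card P" using card_mono[OF fin CP] .
    have "k * (int (card C) + 1) \<le> \<bar>k\<bar> * (int (card C) + 1)"
      by (intro mult_right_mono) auto
    also have "\<dots> \<le> \<bar>k\<bar> * (int (card P) + 1)"
      using cc by (intro mult_left_mono) auto
    finally have "k * int (card C) + k \<le> \<bar>k\<bar> * (int (card P) + 1)"
      by (simp add: distrib_left)
    moreover have "xi_plus ?\<mu> C = k * int (card C)"
      using fin CP by (simp add: xi_plus_mk)
    moreover have "Poly_Mapping.lookup ?\<mu> None = \<bar>k\<bar> * (int (card P) + 1)"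
      using fin by (simp add: mk_None)
    ultimately show "xi_plus ?\<mu> C + k \<le> Poly_Mapping.lookup ?\<mu> None"
      by linarith
  qed (use fin in \<open>auto simp: mk_Some\<close>)
  then show ?thesis using x fin by (auto simp: mk_Some intro!: bexI[of _ ?\<mu>])
qed

lemma tight_chain:
  fixes P :: "'a::order set"
  assumes fin: "finite P" and C: "is_max_chain P C"
  shows "\<exists>\<mu>\<in>S_set P k. Poly_Mapping.lookup \<mu> None = xi_plus \<mu> C + k"
proof -
  define M where "M = \<bar>k\<bar> * int (card P)"
  define v where "v = (\<lambda>y. k + (if y \<in> C then M else 0))"
  define c where "c = k * int (card C) + M * int (card C) + k"
  let ?\<mu> = "mk P c v"
  have CP: "C \<subseteq> P" using C by (simp add: is_max_chain_def is_chain_def)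
  have finC: "finite C" using finite_subset[OF CP fin] .
  have sumv: "(\<Sum>y\<in>D. v y) = k * int (card D) + M * int (card (D \<inter> C))" if "finite D" for D
  proof -
    have "(\<Sum>y\<in>D. v y) = (\<Sum>y\<in>D. k) + (\<Sum>y\<in>D. if y \<in> C then M else 0)"
      by (simp add: v_def sum.distrib)
    also have "(\<Sum>y\<in>D. if y \<in> C then M else 0) = (\<Sum>y\<in>D \<inter> C. M)"
      using that by (simp add: sum.If_cases Int_def)
    finally show ?thesis by simp
  qed
  have M0: "M \<ge> 0" by (simp add: M_def)
  have "?\<mu> \<in> S_set P k"
    unfolding S_set_def
  proof (intro CollectI conjI allI ballI impI)
    fix D assume D: "is_max_chain P D"
    hence DP: "D \<subseteq> P" by (simp add: is_max_chain_def is_chain_def)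
    have finD: "finite D" using finite_subset[OF DP fin] .
    show "xi_plus ?\<mu> D + k \<le> Poly_Mapping.lookup ?\<mu> None"
    proof (cases "D = C")
      case True thus ?thesis using fin DP finD by (simp add: xi_plus_mk mk_None sumv c_def)
    next
      case False
      have "\<not> C \<subseteq> D" using C D False unfolding is_max_chain_def by blast
      hence "D \<inter> C \<subset> C" by auto
      hence lt: "card (D \<inter> C) < card C" using finC by (simp add: psubset_card_mono)
      have cD: "card D \<le> card P" using card_mono[OF fin DP] .
      have "k * int (card D) - k * int (card C) \<le> \<bar>k\<bar> * int (card P)"
      proof -
        have "k * int (card D) - k * int (card C) = k * (int (card D) - int (card C))"
          by (simp add: algebra_simps)
        also have "\<dots> \<le> \<bar>k\<bar> * \<bar>int (card D) - int (card C)\<bar>"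
          by (metis abs_ge_self abs_mult)
        also have "\<bar>int (card D) - int (card C)\<bar> \<le> int (card P)"
          using cD card_mono[OF fin CP] by linarith
        hence "\<bar>k\<bar> * \<bar>int (card D) - int (card C)\<bar> \<le> \<bar>k\<bar> * int (card P)"
          by (intro mult_left_mono) auto
        finally show ?thesis .
      qed
      moreover have "M * int (card (D \<inter> C)) \<le> M * (int (card C) - 1)"
        using lt M0 by (intro mult_left_mono) auto
      moreover have "M * (int (card C) - 1) = M * int (card C) - M"
        by (simp add: algebra_simps)
      moreover have "xi_plus ?\<mu> D = k * int (card D) + M * int (card (D \<inter> C))"
        using fin DP finD by (simp add: xi_plus_mk sumv)
      moreover have "Poly_Mapping.lookup ?\<mu> None = c"
        using fin by (simp add: mk_None)
      ultimately show ?thesis unfolding c_def M_def by linarith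
    qed
  qed (use fin M0 in \<open>auto simp: mk_Some v_def\<close>)
  moreover have "Poly_Mapping.lookup ?\<mu> None = xi_plus ?\<mu> C + k"
    using fin CP finC by (simp add: xi_plus_mk mk_None sumv c_def)
  ultimately show ?thesis by blast
qed

lemma S_nonempty:
  fixes P :: "'a::order set"
  assumes fin: "finite P"
  shows "S_set P k \<noteq> {}"
proof -
  have "is_chain P {}" by (simp add: is_chain_def)
  then obtain C where "is_max_chain P C" using max_chain_ext[OF fin] by blast
  thus ?thesis using tight_chain[OF fin] by blast
qed

lemma S_dual:
  fixes P :: "'a::order set"
  assumes fin: "finite P" and H: "\<forall>\<mu>\<in>S_set P k. \<xi> + \<mu> \<in> S_set P 0"
  shows "\<xi> \<in> S_set P (- k)"
proof -
  obtain \<mu>0 where \<mu>0: "\<mu>0 \<in> S_set P k" using S_nonempty[OF fin] by blast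
  show ?thesis
    unfolding S_set_def
  proof (intro CollectI conjI allI ballI impI)
    fix x assume x: "x \<notin> P"
    have "\<xi> + \<mu>0 \<in> S_set P 0" using H \<mu>0 by blast
    hence "Poly_Mapping.lookup (\<xi> + \<mu>0) (Some x) = 0" using x unfolding S_set_def by blast
    moreover have "Poly_Mapping.lookup \<mu>0 (Some x) = 0" using \<mu>0 x unfolding S_set_def by blast
    ultimately show "Poly_Mapping.lookup \<xi> (Some x) = 0" by (simp add: lookup_add)
  next
    fix x assume x: "x \<in> P"
    obtain \<mu> where \<mu>: "\<mu> \<in> S_set P k" "Poly_Mapping.lookup \<mu> (Some x) = k" using tight_point[OF fin x] by blast
    have "\<xi> + \<mu> \<in> S_set P 0" using H \<mu> by blast
    hence "0 \<le> Poly_Mapping.lookup (\<xi> + \<mu>) (Some x)" using x unfolding S_set_def by blast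
    thus "- k \<le> Poly_Mapping.lookup \<xi> (Some x)" using \<mu> by (simp add: lookup_add)
  next
    fix C assume C: "is_max_chain P C"
    obtain \<mu> where \<mu>: "\<mu> \<in> S_set P k" "Poly_Mapping.lookup \<mu> None = xi_plus \<mu> C + k" using tight_chain[OF fin C] by blast
    have "\<xi> + \<mu> \<in> S_set P 0" using H \<mu> by blast
    hence "xi_plus (\<xi> + \<mu>) C + 0 \<le> Poly_Mapping.lookup (\<xi> + \<mu>) None" using C unfolding S_set_def by blast
    thus "xi_plus \<xi> C + - k \<le> Poly_Mapping.lookup \<xi> None" using \<mu> by (simp add: lookup_add xi_plus_add)
  qed
qed


definition down :: "'a::order set \<Rightarrow> 'a \<Rightarrow> 'a set" where
  "down P x = {y\<in>P. y \<le> x}"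

definition FF :: "'a::order set \<Rightarrow> ('a option \<Rightarrow>\<^sub>0 int) \<Rightarrow> 'a \<Rightarrow> int" where
  "FF P \<xi> x = Max ((\<lambda>D. xi_plus \<xi> D) ` {D. is_max_chain (down P x) D})"

definition BB :: "'a::order set \<Rightarrow> ('a option \<Rightarrow>\<^sub>0 int) \<Rightarrow> 'a \<Rightarrow> int" where
  "BB P \<xi> x = FF P \<xi> x - Poly_Mapping.lookup \<xi> (Some x)"

lemma max_chains_finite:
  assumes "finite Q" shows "finite {D. is_max_chain Q D}"
  by (rule finite_subset[of _ "Pow Q"]) (auto simp: is_max_chain_def is_chain_def assms)

lemma max_chain_exists:
  assumes "finite Q" shows "\<exists>D. is_max_chain Q D"
  using max_chain_ext[OF assms, of "{}"] by (auto simp: is_chain_def)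

lemma down_sub: "down P x \<subseteq> P" by (auto simp: down_def)

lemma max_chain_down_has_x:
  assumes x: "x \<in> P" and D: "is_max_chain (down P x) D"
  shows "x \<in> D"
proof -
  have "is_chain (down P x) (insert x D)"
    using D x unfolding is_max_chain_def is_chain_def down_def by auto
  hence "insert x D = D" using D unfolding is_max_chain_def by blast
  thus ?thesis by blast
qed

lemma FF_attained:
  assumes fin: "finite P"
  shows "\<exists>D. is_max_chain (down P x) D \<and> FF P \<xi> x = xi_plus \<xi> D"
proof -
  have f: "finite (down P x)" using finite_subset[OF down_sub fin] .
  let ?A = "(\<lambda>D. xi_plus \<xi> D) ` {D. is_max_chain (down P x) D}"
  have "finite ?A" using max_chains_finite[OF f] by simp
  moreover have "?A \<noteq> {}" using max_chain_exists[OF f] by auto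
  ultimately have "Max ?A \<in> ?A" by (rule Max_in)
  thus ?thesis unfolding FF_def by auto
qed

lemma FF_ge:
  assumes fin: "finite P" and D: "is_max_chain (down P x) D"
  shows "xi_plus \<xi> D \<le> FF P \<xi> x"
proof -
  have f: "finite (down P x)" using finite_subset[OF down_sub fin] .
  show ?thesis unfolding FF_def
    by (rule Max_ge) (use max_chains_finite[OF f] D in auto)
qed

lemma chain_maximal_greatest:
  assumes C: "is_chain Q C" and y: "y \<in> C" and ym: "\<forall>b\<in>C. y \<le> b \<longrightarrow> y = b" and d: "d \<in> C"
  shows "d \<le> y"
  using C y ym d unfolding is_chain_def by blast

lemma key_bound:
  fixes P :: "'a::order set" and \<psi> :: "int \<Rightarrow> int"
  assumes fin: "finite P" and mono: "\<And>a b. a \<le> b \<Longrightarrow> \<psi> a \<le> \<psi> b"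
  shows "x \<in> P \<Longrightarrow> is_max_chain (down P x) D \<Longrightarrow>
    (\<Sum>y\<in>D. \<psi> (FF P \<xi> y) - \<psi> (BB P \<xi> y)) \<le> \<psi> (FF P \<xi> x) - \<psi> 0"
proof (induction "card D" arbitrary: D x rule: less_induct)
  case less
  note x = less.prems(1) and D = less.prems(2)
  have xD: "x \<in> D" using max_chain_down_has_x[OF x D] .
  have Dd: "D \<subseteq> down P x" using D by (simp add: is_max_chain_def is_chain_def)
  have DP: "D \<subseteq> P" using Dd down_sub by blast
  have finD: "finite D" using finite_subset[OF DP fin] .
  have Dch: "is_chain (down P x) D" using D by (simp add: is_max_chain_def)
  have Dmax: "\<And>E. is_chain (down P x) E \<Longrightarrow> D \<subseteq> E \<Longrightarrow> E = D" using D by (simp add: is_max_chain_def)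
  define D' where "D' = D - {x}"
  have sumD: "(\<Sum>y\<in>D. \<psi> (FF P \<xi> y) - \<psi> (BB P \<xi> y)) =
      (\<psi> (FF P \<xi> x) - \<psi> (BB P \<xi> x)) + (\<Sum>y\<in>D'. \<psi> (FF P \<xi> y) - \<psi> (BB P \<xi> y))"
    unfolding D'_def using finD xD by (simp add: sum.remove)
  show ?case
  proof (cases "D' = {}")
    case True
    have downx: "down P x = {x}"
    proof (rule ccontr)
      assume "down P x \<noteq> {x}"
      then obtain y where y: "y \<in> down P x" "y \<noteq> x" using x by (auto simp: down_def)
      have "is_chain (down P x) (insert y D)"
        using Dch y True xD unfolding is_chain_def D'_def down_def by auto
      hence "insert y D = D" using Dmax by blast
      thus False using y True xD unfolding D'_def by auto
    qed
    obtain E where E: "is_max_chain (down P x) E" "FF P \<xi> x = xi_plus \<xi> E"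
      using FF_attained[OF fin] by blast
    have "x \<in> E" using max_chain_down_has_x[OF x E(1)] .
    moreover have "E \<subseteq> {x}" using E(1) downx by (simp add: is_max_chain_def is_chain_def)
    ultimately have "E = {x}" by blast
    hence "BB P \<xi> x = 0" using E(2) by (simp add: BB_def xi_plus_def)
    thus ?thesis using sumD True by simp
  next
    case False
    have finD': "finite D'" using finD by (simp add: D'_def)
    obtain y where y: "y \<in> D'" "\<forall>b\<in>D'. y \<le> b \<longrightarrow> y = b"
      using finite_has_maximal[OF finD' False] by blast
    have D'ch: "is_chain P D'" using Dch down_sub unfolding is_chain_def D'_def by blast
    have yge: "\<And>d. d \<in> D' \<Longrightarrow> d \<le> y" using chain_maximal_greatest[OF D'ch y(1) y(2)] by blast
    have yx: "y < x" using y(1) Dd unfolding D'_def down_def by auto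
    have yP: "y \<in> P" using y(1) DP unfolding D'_def by auto
    have cover: "\<And>z. z \<in> P \<Longrightarrow> y < z \<Longrightarrow> z < x \<Longrightarrow> False"
    proof -
      fix z assume z: "z \<in> P" "y < z" "z < x"
      have "is_chain (down P x) (insert z D)"
        unfolding is_chain_def
      proof (intro conjI ballI)
        show "insert z D \<subseteq> down P x" using Dd z by (auto simp: down_def)
      next
        fix a b assume a: "a \<in> insert z D" and b: "b \<in> insert z D"
        have comp: "\<And>d. d \<in> D \<Longrightarrow> z \<le> d \<or> d \<le> z"
        proof -
          fix d assume d: "d \<in> D"
          show "z \<le> d \<or> d \<le> z"
          proof (cases "d = x")
            case True thus ?thesis using z by auto
          next
            case False hence "d \<in> D'" using d by (simp add: D'_def)
            hence "d \<le> y" by (rule yge)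
            thus ?thesis using z by auto
          qed
        qed
        show "a \<le> b \<or> b \<le> a" using a b comp Dch unfolding is_chain_def by auto
      qed
      hence "insert z D = D" using Dmax by blast
      hence "z \<in> D" by blast
      moreover have "z \<noteq> x" using z by auto
      ultimately have "z \<in> D'" by (simp add: D'_def)
      hence "z \<le> y" by (rule yge)
      thus False using z by auto
    qed
    have D'max: "is_max_chain (down P y) D'"
      unfolding is_max_chain_def
    proof (intro conjI allI impI)
      show "is_chain (down P y) D'"
        using D'ch yge unfolding is_chain_def down_def by auto
    next
      fix E assume E: "is_chain (down P y) E \<and> D' \<subseteq> E"
      have Ey: "\<And>e. e \<in> E \<Longrightarrow> e \<le> y \<and> e \<in> P" using E unfolding is_chain_def down_def by auto
      have "is_chain (down P x) (insert x E)"
        unfolding is_chain_def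
      proof (intro conjI ballI)
        have "\<And>e. e \<in> E \<Longrightarrow> e \<le> x" using Ey yx by (meson order_le_less_trans order.strict_implies_order)
        thus "insert x E \<subseteq> down P x" using x Ey by (auto simp: down_def)
      next
        fix a b assume "a \<in> insert x E" "b \<in> insert x E"
        moreover have "\<And>e. e \<in> E \<Longrightarrow> e \<le> x" using Ey yx by (meson order_le_less_trans order.strict_implies_order)
        ultimately show "a \<le> b \<or> b \<le> a" using E unfolding is_chain_def by auto
      qed
      moreover have "D \<subseteq> insert x E" using E xD unfolding D'_def by auto
      ultimately have "insert x E = D" using Dmax by blast
      moreover have "x \<notin> E"
      proof
        assume "x \<in> E" hence "x \<le> y" using Ey by blast
        thus False using yx by simp
      qed
      ultimately show "E = D'" unfolding D'_def by auto
    qed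
    have lt: "card D' < card D" unfolding D'_def using finD xD by (meson card_Diff1_less)
    have IH: "(\<Sum>y\<in>D'. \<psi> (FF P \<xi> y) - \<psi> (BB P \<xi> y)) \<le> \<psi> (FF P \<xi> y) - \<psi> 0"
      using less.hyps[OF lt yP D'max] .
    obtain E where E: "is_max_chain (down P y) E" "FF P \<xi> y = xi_plus \<xi> E"
      using FF_attained[OF fin] by blast
    have yE: "y \<in> E" using max_chain_down_has_x[OF yP E(1)] .
    have Ey: "\<And>e. e \<in> E \<Longrightarrow> e \<le> y \<and> e \<in> P" using E(1) unfolding is_max_chain_def is_chain_def down_def by auto
    have xE: "x \<notin> E"
    proof
      assume "x \<in> E" hence "x \<le> y" using Ey by blast
      thus False using yx by simp
    qed
    have Ex: "is_max_chain (down P x) (insert x E)"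
      unfolding is_max_chain_def
    proof (intro conjI allI impI)
      show "is_chain (down P x) (insert x E)"
        unfolding is_chain_def
      proof (intro conjI ballI)
        have "\<And>e. e \<in> E \<Longrightarrow> e \<le> x" using Ey yx by (meson order_le_less_trans order.strict_implies_order)
        thus "insert x E \<subseteq> down P x" using x Ey by (auto simp: down_def)
      next
        fix a b assume "a \<in> insert x E" "b \<in> insert x E"
        moreover have "\<And>e. e \<in> E \<Longrightarrow> e \<le> x" using Ey yx by (meson order_le_less_trans order.strict_implies_order)
        ultimately show "a \<le> b \<or> b \<le> a" using E(1) unfolding is_max_chain_def is_chain_def by auto
      qed
    next
      fix G assume G: "is_chain (down P x) G \<and> insert x E \<subseteq> G"
      have Gsub: "G - {x} \<subseteq> down P y"
      proof
        fix g assume g: "g \<in> G - {x}"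
        have gx: "g \<le> x" "g \<in> P" using G g unfolding is_chain_def down_def by auto
        have "g \<le> y \<or> y \<le> g" using G g yE unfolding is_chain_def by blast
        moreover have "g < x" using gx g by (auto simp: order.strict_iff_order)
        hence "\<not> y < g" using cover[of g] gx by blast
        ultimately have "g \<le> y" by auto
        thus "g \<in> down P y" using gx by (simp add: down_def)
      qed
      have "is_chain (down P y) (G - {x})" using G Gsub unfolding is_chain_def by blast
      moreover have "E \<subseteq> G - {x}" using G xE by auto
      ultimately have "G - {x} = E" using E(1) unfolding is_max_chain_def by blast
      thus "G = insert x E" using G by auto
    qed
    have finE: "finite E" using finite_subset[of E P] Ey fin by auto
    have "xi_plus \<xi> (insert x E) = Poly_Mapping.lookup \<xi> (Some x) + xi_plus \<xi> E"
      unfolding xi_plus_def using finE xE by simp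
    hence "FF P \<xi> y \<le> BB P \<xi> x" using FF_ge[OF fin Ex, of \<xi>] E(2) by (simp add: BB_def)
    hence "\<psi> (FF P \<xi> y) \<le> \<psi> (BB P \<xi> x)" by (rule mono)
    thus ?thesis using sumD IH by linarith
  qed
qed

lemma chain_bound:
  fixes P :: "'a::order set" and \<psi> :: "int \<Rightarrow> int"
  assumes fin: "finite P" and mono: "\<And>a b. a \<le> b \<Longrightarrow> \<psi> a \<le> \<psi> b"
    and C: "is_max_chain P C" and K: "\<And>D. is_max_chain P D \<Longrightarrow> xi_plus \<xi> D \<le> K"
  shows "(\<Sum>y\<in>C. \<psi> (FF P \<xi> y) - \<psi> (BB P \<xi> y)) \<le> \<psi> K - \<psi> 0"
proof (cases "C = {}")
  case True
  have "0 \<le> K" using K[OF C] True by (simp add: xi_plus_def)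
  thus ?thesis using True mono by simp
next
  case False
  have Cch: "is_chain P C" using C by (simp add: is_max_chain_def)
  have CP: "C \<subseteq> P" using Cch by (simp add: is_chain_def)
  have finC: "finite C" using finite_subset[OF CP fin] .
  obtain x where x: "x \<in> C" "\<forall>b\<in>C. x \<le> b \<longrightarrow> x = b"
    using finite_has_maximal[OF finC False] by blast
  have xge: "\<And>d. d \<in> C \<Longrightarrow> d \<le> x" using chain_maximal_greatest[OF Cch x(1) x(2)] by blast
  have xP: "x \<in> P" using x CP by auto
  have xmaxP: "\<And>z. z \<in> P \<Longrightarrow> x \<le> z \<Longrightarrow> z = x"
  proof -
    fix z assume z: "z \<in> P" "x \<le> z"
    have "is_chain P (insert z C)"
      proof -
      have "\<And>d. d \<in> C \<Longrightarrow> d \<le> z" using xge z(2) by (meson order_trans)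
      thus ?thesis using Cch z unfolding is_chain_def by auto
    qed
    hence "insert z C = C" using C unfolding is_max_chain_def by blast
    hence "z \<le> x" using xge by blast
    thus "z = x" using z by auto
  qed
  have Cdown: "is_max_chain (down P x) C"
    unfolding is_max_chain_def
  proof (intro conjI allI impI)
    show "is_chain (down P x) C" using Cch xge unfolding is_chain_def down_def by auto
  next
    fix E assume "is_chain (down P x) E \<and> C \<subseteq> E"
    hence "is_chain P E \<and> C \<subseteq> E" using down_sub unfolding is_chain_def by blast
    thus "E = C" using C unfolding is_max_chain_def by blast
  qed
  have b: "(\<Sum>y\<in>C. \<psi> (FF P \<xi> y) - \<psi> (BB P \<xi> y)) \<le> \<psi> (FF P \<xi> x) - \<psi> 0"
    using key_bound[OF fin mono xP Cdown] .
  obtain E where E: "is_max_chain (down P x) E" "FF P \<xi> x = xi_plus \<xi> E"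
    using FF_attained[OF fin] by blast
  have xE: "x \<in> E" using max_chain_down_has_x[OF xP E(1)] .
  have "is_max_chain P E"
    unfolding is_max_chain_def
  proof (intro conjI allI impI)
    show "is_chain P E" using E(1) down_sub unfolding is_max_chain_def is_chain_def by blast
  next
    fix G assume G: "is_chain P G \<and> E \<subseteq> G"
    have "G \<subseteq> down P x"
    proof
      fix g assume g: "g \<in> G"
      have "g \<le> x \<or> x \<le> g" using G g xE unfolding is_chain_def by blast
      moreover have "g \<in> P" using G g unfolding is_chain_def by blast
      ultimately have "g \<le> x" using xmaxP by fastforce
      thus "g \<in> down P x" using \<open>g \<in> P\<close> by (simp add: down_def)
    qed
    hence "is_chain (down P x) G" using G unfolding is_chain_def by blast
    thus "G = E" using E(1) G unfolding is_max_chain_def by blast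
  qed
  hence "FF P \<xi> x \<le> K" using K E(2) by simp
  hence "\<psi> (FF P \<xi> x) \<le> \<psi> K" by (rule mono)
  thus ?thesis using b by linarith
qed


lemma decomp:
  fixes P :: "'a::order set" and n s :: int
  assumes fin: "finite P" and n: "n \<ge> 1" and s: "s = 1 \<or> s = -1"
    and \<xi>: "\<xi> \<in> S_set P (s * n)"
  shows "\<exists>\<zeta> \<eta>. \<zeta> \<in> S_set P s \<and> \<eta> \<in> S_set P (s * (n - 1)) \<and> \<xi> = \<zeta> + \<eta>"
proof -
  define N where "N = Poly_Mapping.lookup \<xi> None"
  define K where "K = N - s * n"
  define f where "f = (\<lambda>x. Poly_Mapping.lookup \<xi> (Some x))"
  define \<psi> where "\<psi> = (\<lambda>t::int. t div n)"
  define \<phi> where "\<phi> = (\<lambda>t::int. t - t div n)"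
  have \<psi>m: "\<And>a b. a \<le> b \<Longrightarrow> \<psi> a \<le> \<psi> b" unfolding \<psi>_def using psi_mono[OF n] by blast
  have \<phi>m: "\<And>a b. a \<le> b \<Longrightarrow> \<phi> a \<le> \<phi> b" unfolding \<phi>_def using phi_mono[OF n] by blast
  have \<psi>0: "\<psi> 0 = 0" and \<phi>0: "\<phi> 0 = 0" by (simp_all add: \<psi>_def \<phi>_def)
  have Kb: "\<And>D. is_max_chain P D \<Longrightarrow> xi_plus \<xi> D \<le> K"
    using \<xi> unfolding S_set_def K_def N_def by force
  define h where "h = (\<lambda>x. \<psi> (FF P \<xi> x) - \<psi> (BB P \<xi> x))"
  have FB: "\<And>x. FF P \<xi> x = BB P \<xi> x + f x" by (simp add: BB_def f_def)
  have pw: "\<And>x. x \<in> P \<Longrightarrow> h x \<ge> s \<and> f x - h x \<ge> s * (n - 1)"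
  proof -
    fix x assume x: "x \<in> P"
    have fx: "f x \<ge> s * n" using \<xi> x unfolding S_set_def f_def by blast
    show "h x \<ge> s \<and> f x - h x \<ge> s * (n - 1)"
    proof (cases "s = 1")
      case True
      thus ?thesis using arith_pos[OF n, of "f x" "BB P \<xi> x"] fx unfolding h_def \<psi>_def FB by simp
    next
      case False
      hence s': "s = -1" using s by blast
      thus ?thesis using arith_neg[OF n, of "f x" "BB P \<xi> x"] fx unfolding h_def \<psi>_def FB by simp
    qed
  qed
  define \<zeta> where "\<zeta> = mk P (\<psi> K + s) h"
  define \<eta> where "\<eta> = \<xi> - \<zeta>"
  have \<zeta>S: "\<zeta> \<in> S_set P s"
    unfolding S_set_def
  proof (intro CollectI conjI allI ballI impI)
    fix x assume "x \<notin> P" thus "Poly_Mapping.lookup \<zeta> (Some x) = 0" by (simp add: \<zeta>_def mk_Some fin)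
  next
    fix x assume x: "x \<in> P" thus "s \<le> Poly_Mapping.lookup \<zeta> (Some x)" using pw[OF x] by (simp add: \<zeta>_def mk_Some fin)
  next
    fix C assume C: "is_max_chain P C"
    have CP: "C \<subseteq> P" using C by (simp add: is_max_chain_def is_chain_def)
    have "xi_plus \<zeta> C = (\<Sum>y\<in>C. h y)" using fin CP by (simp add: \<zeta>_def xi_plus_mk)
    also have "\<dots> \<le> \<psi> K - \<psi> 0" unfolding h_def by (rule chain_bound[OF fin \<psi>m C Kb])
    finally show "xi_plus \<zeta> C + s \<le> Poly_Mapping.lookup \<zeta> None" using \<psi>0 by (simp add: \<zeta>_def mk_None fin)
  qed
  have \<eta>S: "\<eta> \<in> S_set P (s * (n - 1))"
    unfolding S_set_def
  proof (intro CollectI conjI allI ballI impI)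
    fix x assume x: "x \<notin> P"
    thus "Poly_Mapping.lookup \<eta> (Some x) = 0"
      using \<xi> unfolding S_set_def by (simp add: \<eta>_def lookup_minus \<zeta>_def mk_Some fin)
  next
    fix x assume x: "x \<in> P" thus "s * (n - 1) \<le> Poly_Mapping.lookup \<eta> (Some x)"
      using pw[OF x] by (simp add: \<eta>_def lookup_minus \<zeta>_def mk_Some fin f_def)
  next
    fix C assume C: "is_max_chain P C"
    have CP: "C \<subseteq> P" using C by (simp add: is_max_chain_def is_chain_def)
    have e1: "xi_plus \<zeta> C = (\<Sum>y\<in>C. h y)" using fin CP by (simp add: \<zeta>_def xi_plus_mk)
    have e2: "xi_plus \<xi> C = (\<Sum>y\<in>C. f y)" by (simp add: xi_plus_def f_def)
    have "xi_plus \<eta> C = (\<Sum>y\<in>C. f y - h y)"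
      by (simp add: \<eta>_def xi_plus_diff e1 e2 sum_subtractf)
    also have "\<dots> = (\<Sum>y\<in>C. \<phi> (FF P \<xi> y) - \<phi> (BB P \<xi> y))"
      by (rule sum.cong) (simp_all add: h_def \<phi>_def \<psi>_def FB)
    also have "\<dots> \<le> \<phi> K - \<phi> 0" by (rule chain_bound[OF fin \<phi>m C Kb])
    finally have "xi_plus \<eta> C \<le> K - \<psi> K" using \<phi>0 by (simp add: \<phi>_def \<psi>_def)
    moreover have "Poly_Mapping.lookup \<eta> None = N - (\<psi> K + s)"
      by (simp add: \<eta>_def lookup_minus \<zeta>_def mk_None fin N_def)
    moreover have "s * (n - 1) = s * n - s" by (simp add: algebra_simps)
    ultimately show "xi_plus \<eta> C + s * (n - 1) \<le> Poly_Mapping.lookup \<eta> None"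
      unfolding K_def by linarith
  qed
  have "\<xi> = \<zeta> + \<eta>" by (simp add: \<eta>_def)
  thus ?thesis using \<zeta>S \<eta>S by blast
qed


lemma poly_repr: "p = (\<Sum>k\<in>Poly_Mapping.keys p. Poly_Mapping.single k (Poly_Mapping.lookup p k))"
proof (rule poly_mapping_eqI)
  fix j
  have "Poly_Mapping.lookup (\<Sum>k\<in>Poly_Mapping.keys p. Poly_Mapping.single k (Poly_Mapping.lookup p k)) j
      = (\<Sum>k\<in>Poly_Mapping.keys p. (Poly_Mapping.lookup p k when k = j))"
    by (simp add: lookup_sum lookup_single)
  also have "\<dots> = Poly_Mapping.lookup p j"
  proof (cases "j \<in> Poly_Mapping.keys p")
    case True
    have "(\<Sum>k\<in>Poly_Mapping.keys p. (Poly_Mapping.lookup p k when k = j)) =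
        (\<Sum>k\<in>Poly_Mapping.keys p. if k = j then Poly_Mapping.lookup p k else 0)"
      by (rule sum.cong) (auto simp: when_def)
    also have "\<dots> = Poly_Mapping.lookup p j" using True by (simp add: sum.delta)
    finally show ?thesis .
  next
    case False
    hence "\<And>k. k \<in> Poly_Mapping.keys p \<Longrightarrow> (Poly_Mapping.lookup p k when k = j) = 0" by (auto simp: when_def)
    hence "(\<Sum>k\<in>Poly_Mapping.keys p. (Poly_Mapping.lookup p k when k = j)) = 0" by simp
    thus ?thesis using False by (simp add: in_keys_iff)
  qed
  finally show "Poly_Mapping.lookup p j = Poly_Mapping.lookup (\<Sum>k\<in>Poly_Mapping.keys p. Poly_Mapping.single k (Poly_Mapping.lookup p k)) j" by simp
qed

lemma lookup_mult_single:
  fixes p :: "('e::ab_group_add) \<Rightarrow>\<^sub>0 ('k::field)"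
  shows "Poly_Mapping.lookup (p * Poly_Mapping.single \<mu> 1) (k + \<mu>) = Poly_Mapping.lookup p k"
proof -
  have "p * Poly_Mapping.single \<mu> 1 = (\<Sum>c\<in>Poly_Mapping.keys p. Poly_Mapping.single (c + \<mu>) (Poly_Mapping.lookup p c))"
    by (subst poly_repr[of p]) (simp add: sum_distrib_right mult_single)
  hence "Poly_Mapping.lookup (p * Poly_Mapping.single \<mu> 1) (k + \<mu>) =
      (\<Sum>c\<in>Poly_Mapping.keys p. (Poly_Mapping.lookup p c when c + \<mu> = k + \<mu>))"
    by (simp add: lookup_sum lookup_single)
  also have "\<dots> = (\<Sum>c\<in>Poly_Mapping.keys p. if c = k then Poly_Mapping.lookup p c else 0)"
    by (rule sum.cong) (auto simp: when_def)
  also have "\<dots> = Poly_Mapping.lookup p k" by (simp add: sum.delta in_keys_iff)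
  finally show ?thesis .
qed

locale rh =
  fixes \<phi> :: "(('b \<Rightarrow>\<^sub>0 int) \<Rightarrow>\<^sub>0 'k::field) \<Rightarrow> 'f::field"
  assumes hadd: "\<And>p q. \<phi> (p + q) = \<phi> p + \<phi> q"
    and hmult: "\<And>p q. \<phi> (p * q) = \<phi> p * \<phi> q"
    and hone: "\<phi> 1 = 1"
    and hinj: "inj \<phi>"
begin

lemma h0: "\<phi> 0 = 0"
proof -
  have "\<phi> 0 + \<phi> 0 = \<phi> 0 + 0" using hadd[of 0 0] by simp
  thus ?thesis by (rule add_left_imp_eq)
qed

lemma hsum: "\<phi> (\<Sum>i\<in>A. g i) = (\<Sum>i\<in>A. \<phi> (g i))"
  by (induction A rule: infinite_finite_induct) (auto simp: h0 hadd)

lemma single_inv: "\<phi> (Poly_Mapping.single \<mu> 1) * \<phi> (Poly_Mapping.single (- \<mu>) 1) = 1"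
  by (simp flip: hmult add: mult_single hone)

lemma single_ne: "\<phi> (Poly_Mapping.single \<mu> 1) \<noteq> 0"
proof
  assume "\<phi> (Poly_Mapping.single \<mu> 1) = 0"
  hence "\<phi> (Poly_Mapping.single \<mu> 1) = \<phi> 0" by (simp add: h0)
  hence "Poly_Mapping.single \<mu> (1::'k) = 0" using hinj by (simp add: inj_eq)
  thus False by (metis lookup_single_eq lookup_zero one_neq_zero)
qed

lemma keys_prod_sub:
  assumes "\<forall>a\<in>A. \<forall>b\<in>B. a + b \<in> Cs" "p \<in> monspan A" "q \<in> monspan B"
  shows "p * q \<in> monspan Cs"
  using keys_mult[of p q] assms unfolding monspan_def by blast

lemma prod_lemma:
  assumes cl: "\<forall>a\<in>A. \<forall>b\<in>B. a + b \<in> Cs"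
    and dec: "\<forall>c\<in>Cs. \<exists>a\<in>A. \<exists>b\<in>B. c = a + b"
  shows "ideal_prod (\<phi> ` monspan A) (\<phi> ` monspan B) = \<phi> ` monspan Cs"
proof
  show "ideal_prod (\<phi> ` monspan A) (\<phi> ` monspan B) \<subseteq> \<phi> ` monspan Cs"
  proof
    fix z assume "z \<in> ideal_prod (\<phi> ` monspan A) (\<phi> ` monspan B)"
    then obtain k :: nat and x y :: "nat \<Rightarrow> 'f" where z: "z = (\<Sum>i<k. x i * y i)"
      and xy: "\<forall>i<k. x i \<in> \<phi> ` monspan A \<and> y i \<in> \<phi> ` monspan B"
      unfolding ideal_prod_def by auto
    have "\<forall>i. \<exists>pq. i < k \<longrightarrow> fst pq \<in> monspan A \<and> snd pq \<in> monspan B \<and> x i = \<phi> (fst pq) \<and> y i = \<phi> (snd pq)"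
    proof
      fix i show "\<exists>pq. i < k \<longrightarrow> fst pq \<in> monspan A \<and> snd pq \<in> monspan B \<and> x i = \<phi> (fst pq) \<and> y i = \<phi> (snd pq)"
      proof (cases "i < k")
        case True
        then obtain p q where "p \<in> monspan A" "x i = \<phi> p" "q \<in> monspan B" "y i = \<phi> q" using xy by blast
        thus ?thesis by (intro exI[of _ "(p, q)"]) simp
      qed simp
    qed
    hence "\<exists>pq. \<forall>i. i < k \<longrightarrow> fst (pq i) \<in> monspan A \<and> snd (pq i) \<in> monspan B \<and> x i = \<phi> (fst (pq i)) \<and> y i = \<phi> (snd (pq i))"
      by (rule choice)
    then obtain pq where pq: "\<And>i. i < k \<Longrightarrow> fst (pq i) \<in> monspan A \<and> snd (pq i) \<in> monspan B \<and> x i = \<phi> (fst (pq i)) \<and> y i = \<phi> (snd (pq i))"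
      by blast
    have "z = \<phi> (\<Sum>i<k. fst (pq i) * snd (pq i))"
      unfolding z hsum using pq by (simp add: hmult)
    moreover have "(\<Sum>i<k. fst (pq i) * snd (pq i)) \<in> monspan Cs"
    proof -
      have "\<And>i. i < k \<Longrightarrow> fst (pq i) * snd (pq i) \<in> monspan Cs"
        using keys_prod_sub[OF cl] pq by blast
      thus ?thesis using keys_sum[of "\<lambda>i. fst (pq i) * snd (pq i)" "{..<k}"]
        unfolding monspan_def by blast
    qed
    ultimately show "z \<in> \<phi> ` monspan Cs" by blast
  qed
next
  show "\<phi> ` monspan Cs \<subseteq> ideal_prod (\<phi> ` monspan A) (\<phi> ` monspan B)"
  proof
    fix z assume "z \<in> \<phi> ` monspan Cs"
    then obtain p where p: "p \<in> monspan Cs" "z = \<phi> p" by blast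
    have "\<forall>c. \<exists>ab. c \<in> Cs \<longrightarrow> fst ab \<in> A \<and> snd ab \<in> B \<and> c = fst ab + snd ab"
    proof
      fix c show "\<exists>ab. c \<in> Cs \<longrightarrow> fst ab \<in> A \<and> snd ab \<in> B \<and> c = fst ab + snd ab"
      proof (cases "c \<in> Cs")
        case True
        then obtain a b where "a \<in> A" "b \<in> B" "c = a + b" using dec by blast
        thus ?thesis by (intro exI[of _ "(a, b)"]) simp
      qed simp
    qed
    hence "\<exists>g. \<forall>c. c \<in> Cs \<longrightarrow> fst (g c) \<in> A \<and> snd (g c) \<in> B \<and> c = fst (g c) + snd (g c)"
      by (rule choice)
    then obtain g0 where g0: "\<And>c. c \<in> Cs \<Longrightarrow> fst (g0 c) \<in> A \<and> snd (g0 c) \<in> B \<and> c = fst (g0 c) + snd (g0 c)"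
      by blast
    define ga where "ga = (\<lambda>c. fst (g0 c))"
    define gb where "gb = (\<lambda>c. snd (g0 c))"
    have g: "\<And>c. c \<in> Cs \<Longrightarrow> ga c \<in> A \<and> gb c \<in> B \<and> c = ga c + gb c"
      using g0 unfolding ga_def gb_def by blast
    let ?K = "Poly_Mapping.keys p"
    have KC: "?K \<subseteq> Cs" using p unfolding monspan_def by blast
    obtain h where h: "bij_betw h {0..<card ?K} ?K" using ex_bij_betw_nat_finite[OF finite_keys[of p]] by blast
    define x where "x = (\<lambda>i. \<phi> (Poly_Mapping.single (ga (h i)) (Poly_Mapping.lookup p (h i))))"
    define y where "y = (\<lambda>i. \<phi> (Poly_Mapping.single (gb (h i)) 1))"
    have hK: "\<And>i. i < card ?K \<Longrightarrow> h i \<in> ?K" using h unfolding bij_betw_def by auto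
    have "z = \<phi> (\<Sum>c\<in>?K. Poly_Mapping.single c (Poly_Mapping.lookup p c))"
      using p(2) poly_repr[of p] by simp
    also have "\<dots> = (\<Sum>c\<in>?K. \<phi> (Poly_Mapping.single c (Poly_Mapping.lookup p c)))" by (rule hsum)
    also have "\<dots> = (\<Sum>i\<in>{0..<card ?K}. \<phi> (Poly_Mapping.single (h i) (Poly_Mapping.lookup p (h i))))"
      by (rule sum.reindex_bij_betw[OF h, symmetric])
    also have "\<dots> = (\<Sum>i<card ?K. x i * y i)"
    proof (rule sum.cong)
      fix i assume "i \<in> {..<card ?K}"
      hence "h i \<in> Cs" using hK KC by auto
      hence "h i = ga (h i) + gb (h i)" using g by blast
      hence "Poly_Mapping.single (h i) (Poly_Mapping.lookup p (h i)) =
          Poly_Mapping.single (ga (h i)) (Poly_Mapping.lookup p (h i)) * Poly_Mapping.single (gb (h i)) 1"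
        by (simp add: mult_single)
      thus "\<phi> (Poly_Mapping.single (h i) (Poly_Mapping.lookup p (h i))) = x i * y i"
        by (simp add: x_def y_def hmult)
    qed (simp add: atLeast0LessThan)
    finally have zs: "z = (\<Sum>i<card ?K. x i * y i)" .
    have "\<forall>i<card ?K. x i \<in> \<phi> ` monspan A \<and> y i \<in> \<phi> ` monspan B"
    proof (intro allI impI conjI)
      fix i assume "i < card ?K"
      hence "h i \<in> Cs" using hK KC by auto
      hence gi: "ga (h i) \<in> A" "gb (h i) \<in> B" using g by blast+
      show "x i \<in> \<phi> ` monspan A" unfolding x_def monspan_def using gi by auto
      show "y i \<in> \<phi> ` monspan B" unfolding y_def monspan_def using gi by auto
    qed
    thus "z \<in> ideal_prod (\<phi> ` monspan A) (\<phi> ` monspan B)"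
      unfolding ideal_prod_def using zs by blast
  qed
qed

lemma colon_lemma:
  assumes a: "\<forall>\<xi>\<in>Sd. \<forall>\<mu>\<in>Sk. \<xi> + \<mu> \<in> S0"
    and b: "\<And>\<xi>. (\<forall>\<mu>\<in>Sk. \<xi> + \<mu> \<in> S0) \<Longrightarrow> \<xi> \<in> Sd"
    and c: "\<mu>c \<in> Sk" "\<mu>c \<in> S0"
  shows "colon (\<phi> ` monspan S0) (\<phi> ` monspan Sk) = \<phi> ` monspan Sd"
proof
  show "colon (\<phi> ` monspan S0) (\<phi> ` monspan Sk) \<subseteq> \<phi> ` monspan Sd"
  proof
    fix x assume "x \<in> colon (\<phi> ` monspan S0) (\<phi> ` monspan Sk)"
    hence xm: "\<And>y. y \<in> \<phi> ` monspan Sk \<Longrightarrow> x * y \<in> \<phi> ` monspan S0" unfolding colon_def by blast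
    have smon: "\<And>\<mu>. \<mu> \<in> Sk \<Longrightarrow> Poly_Mapping.single \<mu> 1 \<in> monspan Sk" unfolding monspan_def by simp
    obtain r0 where r0: "x * \<phi> (Poly_Mapping.single \<mu>c 1) = \<phi> r0" using xm[OF imageI[OF smon[OF c(1)]]] by blast
    define cc where "cc = r0 * Poly_Mapping.single (- \<mu>c) 1"
    have xc: "x = \<phi> cc"
    proof -
      have "\<phi> cc = x * (\<phi> (Poly_Mapping.single \<mu>c 1) * \<phi> (Poly_Mapping.single (- \<mu>c) 1))"
        by (simp add: cc_def hmult r0 flip: r0 mult.assoc)
      thus ?thesis by (simp add: single_inv)
    qed
    have "Poly_Mapping.keys cc \<subseteq> Sd"
    proof
      fix \<xi> assume \<xi>: "\<xi> \<in> Poly_Mapping.keys cc"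
      have "\<forall>\<mu>\<in>Sk. \<xi> + \<mu> \<in> S0"
      proof
        fix \<mu> assume \<mu>: "\<mu> \<in> Sk"
        obtain r where r: "r \<in> monspan S0" "x * \<phi> (Poly_Mapping.single \<mu> 1) = \<phi> r"
          using xm[OF imageI[OF smon[OF \<mu>]]] by blast
        hence "\<phi> r = \<phi> (cc * Poly_Mapping.single \<mu> 1)" by (simp add: xc hmult)
        hence "r = cc * Poly_Mapping.single \<mu> 1" using hinj by (simp add: inj_eq)
        hence kk: "Poly_Mapping.keys (cc * Poly_Mapping.single \<mu> 1) \<subseteq> S0" using r(1) unfolding monspan_def by blast
        have "Poly_Mapping.lookup (cc * Poly_Mapping.single \<mu> 1) (\<xi> + \<mu>) \<noteq> 0"
          using \<xi> by (simp add: lookup_mult_single in_keys_iff)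
        thus "\<xi> + \<mu> \<in> S0" using kk by (auto simp: in_keys_iff)
      qed
      thus "\<xi> \<in> Sd" by (rule b)
    qed
    hence "cc \<in> monspan Sd" unfolding monspan_def by blast
    thus "x \<in> \<phi> ` monspan Sd" using xc by blast
  qed
next
  show "\<phi> ` monspan Sd \<subseteq> colon (\<phi> ` monspan S0) (\<phi> ` monspan Sk)"
  proof
    fix x assume "x \<in> \<phi> ` monspan Sd"
    then obtain p where p: "p \<in> monspan Sd" "x = \<phi> p" by blast
    have sc: "Poly_Mapping.single \<mu>c 1 \<in> monspan Sk" "Poly_Mapping.single \<mu>c 1 \<in> monspan S0"
      using c unfolding monspan_def by simp_all
    have a1: "p * Poly_Mapping.single \<mu>c 1 \<in> monspan S0" by (rule keys_prod_sub[OF a p(1) sc(1)])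
    have "x = \<phi> (p * Poly_Mapping.single \<mu>c 1) / \<phi> (Poly_Mapping.single \<mu>c 1)"
      using single_ne[of \<mu>c] p(2) by (simp add: hmult)
    hence "x \<in> quot_field (\<phi> ` monspan S0)"
      unfolding quot_field_def using a1 sc(2) single_ne[of \<mu>c] by blast
    moreover have "\<forall>y\<in>\<phi> ` monspan Sk. x * y \<in> \<phi> ` monspan S0"
    proof
      fix y assume "y \<in> \<phi> ` monspan Sk"
      then obtain q where q: "q \<in> monspan Sk" "y = \<phi> q" by blast
      have pq: "p * q \<in> monspan S0" by (rule keys_prod_sub[OF a p(1) q(1)])
      have "x * y = \<phi> (p * q)" by (simp add: p(2) q(2) hmult)
      thus "x * y \<in> \<phi> ` monspan S0" using pq by blast
    qed
    ultimately show "x \<in> colon (\<phi> ` monspan S0) (\<phi> ` monspan Sk)" unfolding colon_def by blast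
  qed
qed

end



lemma colonS:
  fixes P :: "'a::order set" and \<phi> :: "(('a option \<Rightarrow>\<^sub>0 int) \<Rightarrow>\<^sub>0 'k::field) \<Rightarrow> 'f::field"
  assumes fin: "finite P" and r: "rh \<phi>"
  shows "colon (\<phi> ` monspan (S_set P 0)) (\<phi> ` monspan (S_set P k)) = \<phi> ` monspan (S_set P (- k))"
proof -
  obtain \<mu>c where \<mu>c: "\<mu>c \<in> S_set P (max k 0)" using S_nonempty[OF fin] by blast
  have c1: "\<mu>c \<in> S_set P k" using S_mono[of k "max k 0" P] \<mu>c by auto
  have c2: "\<mu>c \<in> S_set P 0" using S_mono[of 0 "max k 0" P] \<mu>c by auto
  have a: "\<forall>\<xi>\<in>S_set P (- k). \<forall>\<mu>\<in>S_set P k. \<xi> + \<mu> \<in> S_set P 0"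
    using S_add[of _ P "- k" _ k] by auto
  show ?thesis
    by (rule rh.colon_lemma[OF r a _ c1 c2]) (rule S_dual[OF fin], blast)
qed

lemma prodS:
  fixes P :: "'a::order set" and \<phi> :: "(('a option \<Rightarrow>\<^sub>0 int) \<Rightarrow>\<^sub>0 'k::field) \<Rightarrow> 'f::field"
  assumes fin: "finite P" and r: "rh \<phi>" and j: "j \<ge> 1" and s: "s = 1 \<or> s = -1"
  shows "ideal_prod (\<phi> ` monspan (S_set P (s * j))) (\<phi> ` monspan (S_set P s)) = \<phi> ` monspan (S_set P (s * (j + 1)))"
proof (rule rh.prod_lemma[OF r])
  show "\<forall>a\<in>S_set P (s * j). \<forall>b\<in>S_set P s. a + b \<in> S_set P (s * (j + 1))"
    using S_add[of _ P "s * j" _ s] by (auto simp: algebra_simps)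
  show "\<forall>c\<in>S_set P (s * (j + 1)). \<exists>a\<in>S_set P (s * j). \<exists>b\<in>S_set P s. c = a + b"
  proof
    fix c assume c: "c \<in> S_set P (s * (j + 1))"
    obtain \<zeta> \<eta> where "\<zeta> \<in> S_set P s" "\<eta> \<in> S_set P (s * (j + 1 - 1))" "c = \<zeta> + \<eta>"
      using decomp[OF fin _ s c] j by auto
    thus "\<exists>a\<in>S_set P (s * j). \<exists>b\<in>S_set P s. c = a + b" by (auto simp: add.commute)
  qed
qed

lemma ordS:
  fixes P :: "'a::order set" and \<phi> :: "(('a option \<Rightarrow>\<^sub>0 int) \<Rightarrow>\<^sub>0 'k::field) \<Rightarrow> 'f::field"
  assumes fin: "finite P" and r: "rh \<phi>" and s: "s = 1 \<or> s = -1"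
  shows "ord_pow R (\<phi> ` monspan (S_set P s)) (Suc m) = \<phi> ` monspan (S_set P (s * (int m + 1)))"
proof (induction m)
  case 0 thus ?case by simp
next
  case (Suc m)
  have "ord_pow R (\<phi> ` monspan (S_set P s)) (Suc (Suc m)) =
      ideal_prod (\<phi> ` monspan (S_set P (s * (int m + 1)))) (\<phi> ` monspan (S_set P s))"
    using Suc by simp
  also have "\<dots> = \<phi> ` monspan (S_set P (s * (int m + 1 + 1)))"
    by (rule prodS[OF fin r _ s]) simp
  finally show ?case by simp
qed

lemma divS:
  fixes P :: "'a::order set" and \<phi> :: "(('a option \<Rightarrow>\<^sub>0 int) \<Rightarrow>\<^sub>0 'k::field) \<Rightarrow> 'f::field"
  assumes fin: "finite P" and r: "rh \<phi>" and s: "s = 1 \<or> s = -1"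
  shows "div_pow (\<phi> ` monspan (S_set P 0)) (\<phi> ` monspan (S_set P s)) (Suc m) = \<phi> ` monspan (S_set P (s * (int m + 1)))"
proof (induction m)
  case 0 thus ?case by simp
next
  case (Suc m)
  let ?R = "\<phi> ` monspan (S_set P 0)"
  have "div_pow ?R (\<phi> ` monspan (S_set P s)) (Suc (Suc m)) =
      colon ?R (colon ?R (ideal_prod (\<phi> ` monspan (S_set P (s * (int m + 1)))) (\<phi> ` monspan (S_set P s))))"
    using Suc by (simp add: div_prod_def)
  also have "ideal_prod (\<phi> ` monspan (S_set P (s * (int m + 1)))) (\<phi> ` monspan (S_set P s)) = \<phi> ` monspan (S_set P (s * (int m + 1 + 1)))"
    by (rule prodS[OF fin r _ s]) simp
  also have "colon ?R (colon ?R \<dots>) = \<phi> ` monspan (S_set P (s * (int m + 1 + 1)))"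
    using colonS[OF fin r] by simp
  finally show ?case by simp
qed

theorem mainTheorem1:
  fixes P :: "'a::order set"
    and \<phi> :: "(('a option \<Rightarrow>\<^sub>0 int) \<Rightarrow>\<^sub>0 'k::field) \<Rightarrow> 'f::field"
    and n :: nat
  assumes finP: "finite P"
    and hom_add: "\<And>p q. \<phi> (p + q) = \<phi> p + \<phi> q"
    and hom_mult: "\<And>p q. \<phi> (p * q) = \<phi> p * \<phi> q"
    and hom_one: "\<phi> 1 = 1"
    and inj: "inj \<phi>"
    and npos: "n \<ge> 1"
  defines "R \<equiv> \<phi> ` monspan (S_set P 0)"
    and "\<omega> \<equiv> \<phi> ` monspan (S_set P 1)"
  shows "div_pow R \<omega> n = ord_pow R \<omega> n
       \<and> ord_pow R \<omega> n = \<phi> ` monspan (S_set P (int n))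
       \<and> div_pow R (colon R \<omega>) n = ord_pow R (colon R \<omega>) n
       \<and> ord_pow R (colon R \<omega>) n = \<phi> ` monspan (S_set P (- int n))"
proof -
  have r: "rh \<phi>" by unfold_locales (use hom_add hom_mult hom_one inj in auto)
  obtain m where m: "n = Suc m" using npos by (cases n) auto
  have cw: "colon R \<omega> = \<phi> ` monspan (S_set P (-1))"
    unfolding R_def \<omega>_def using colonS[OF finP r, of 1] by simp
  have o1: "ord_pow R \<omega> n = \<phi> ` monspan (S_set P (int n))"
    unfolding \<omega>_def m using ordS[OF finP r, of 1 R m] by (simp add: add.commute)
  have d1: "div_pow R \<omega> n = \<phi> ` monspan (S_set P (int n))"
    unfolding R_def \<omega>_def m using divS[OF finP r, of 1 m] by (simp add: add.commute)
  have e: "(-1::int) * (int m + 1) = - int (Suc m)" by simp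
  have o2: "ord_pow R (colon R \<omega>) n = \<phi> ` monspan (S_set P (- int n))"
    unfolding cw m using ordS[OF finP r, of "-1" R m] unfolding e by simp
  have d2: "div_pow R (colon R \<omega>) n = \<phi> ` monspan (S_set P (- int n))"
    unfolding cw unfolding m R_def using divS[OF finP r, of "-1" m] unfolding e by simp
  show ?thesis using o1 d1 o2 d2 by simp
qed


end
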